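(* Let $0<c<1$, let $n,d$ be such that $\delta=(3c)^{1/3}\left(\frac{\log d}{\log \frac{n}{d^2}}\right)^{1/4}$ satisfies $\delta<1/16$, and let $G$ be a $d$-regular graph on $n$ nodes. If $K$ is a pseudo-clique of $G$, then \[|K| \leq \frac{1 - 8\delta}{1- 13\delta} (d+1).\]
   Context: A dense spot of $G$ is a subgraph $H\subseteq G$ with $|H|\le d+1$ nodes such that every node $x\in H$ has $\deg_H(x)\ge(1-4\delta)d$. A pseudo-clique is a subgraph $K=\bigcup_{H\in\mathcal{H}}H$ where $\mathcal{H}$ is a maximal family of pairwise intersecting (sharing at least one node) dense spots. $|K|$ is the number of nodes of $K$. *)

theory Defs
  imports Complex_Main
begin

definition simple_graph :: "'a set \<Rightarrow> ('a \<Rightarrow> 'a \<Rightarrow> bool) \<Rightarrow> bool" where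
  "simple_graph V E \<longleftrightarrow> finite V \<and> (\<forall>x y. E x y \<longrightarrow> x \<in> V \<and> y \<in> V)
     \<and> (\<forall>x y. E x y \<longrightarrow> E y x) \<and> (\<forall>x. \<not> E x x)"

definition regular :: "'a set \<Rightarrow> ('a \<Rightarrow> 'a \<Rightarrow> bool) \<Rightarrow> nat \<Rightarrow> bool" where
  "regular V E d \<longleftrightarrow> (\<forall>x\<in>V. card {y\<in>V. E x y} = d)"

definition deg_in :: "('a \<Rightarrow> 'a \<Rightarrow> bool) \<Rightarrow> 'a set \<Rightarrow> 'a \<Rightarrow> nat" where
  "deg_in E H x = card {y\<in>H. E x y}"

definition dense_spot :: "'a set \<Rightarrow> ('a \<Rightarrow> 'a \<Rightarrow> bool) \<Rightarrow> nat \<Rightarrow> real \<Rightarrow> 'a set \<Rightarrow> bool" where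
  "dense_spot V E d \<delta> H \<longleftrightarrow> H \<subseteq> V \<and> card H \<le> d + 1
     \<and> (\<forall>x\<in>H. real (deg_in E H x) \<ge> (1 - 4 * \<delta>) * real d)"

definition pairwise_intersecting :: "'a set set \<Rightarrow> bool" where
  "pairwise_intersecting \<H> \<longleftrightarrow> (\<forall>H1\<in>\<H>. \<forall>H2\<in>\<H>. H1 \<noteq> H2 \<longrightarrow> H1 \<inter> H2 \<noteq> {})"

definition maximal_intersecting_family ::
  "'a set \<Rightarrow> ('a \<Rightarrow> 'a \<Rightarrow> bool) \<Rightarrow> nat \<Rightarrow> real \<Rightarrow> 'a set set \<Rightarrow> bool" where
  "maximal_intersecting_family V E d \<delta> \<H> \<longleftrightarrow>
     (\<forall>H\<in>\<H>. dense_spot V E d \<delta> H) \<and> pairwise_intersecting \<H>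
     \<and> (\<forall>\<H>'. \<H> \<subset> \<H>' \<and> (\<forall>H\<in>\<H>'. dense_spot V E d \<delta> H) \<longrightarrow> \<not> pairwise_intersecting \<H>')"

definition pseudo_clique ::
  "'a set \<Rightarrow> ('a \<Rightarrow> 'a \<Rightarrow> bool) \<Rightarrow> nat \<Rightarrow> real \<Rightarrow> 'a set \<Rightarrow> bool" where
  "pseudo_clique V E d \<delta> K \<longleftrightarrow>
     (\<exists>\<H>. maximal_intersecting_family V E d \<delta> \<H> \<and> K = \<Union>\<H>)"

end

theory Submission
  imports Defs
begin

lemma card_filter_sum:
  assumes "finite A"
  shows "real (card {x\<in>A. P x}) = (\<Sum>x\<in>A. if P x then 1 else (0::real))"
  using assms by (simp add: sum.If_cases Int_def conj_commute)

lemma inter_big: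
  assumes sg: "simple_graph V E" and reg: "regular V E d"
    and H: "dense_spot V E d \<delta> H" and H0: "dense_spot V E d \<delta> H0"
    and x: "x \<in> H" "x \<in> H0"
  shows "real (card (H \<inter> H0)) \<ge> real d - 8 * \<delta> * d + 1"
proof -
  have finV: "finite V" using sg by (simp add: simple_graph_def)
  have HV: "H \<subseteq> V" "H0 \<subseteq> V" using H H0 by (auto simp: dense_spot_def)
  have fin: "finite H" "finite H0" using HV finV finite_subset by auto
  define S1 where "S1 = {y\<in>H. E x y}"
  define S2 where "S2 = {y\<in>H0. E x y}"
  have c1: "real (card S1) \<ge> (1 - 4*\<delta>) * d" using H x unfolding S1_def dense_spot_def deg_in_def by auto
  have c2: "real (card S2) \<ge> (1 - 4*\<delta>) * d" using H0 x unfolding S2_def dense_spot_def deg_in_def by auto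
  have "S1 \<union> S2 \<subseteq> {y\<in>V. E x y}" using HV unfolding S1_def S2_def by auto
  hence "card (S1 \<union> S2) \<le> card {y\<in>V. E x y}" using finV by (intro card_mono) auto
  also have "\<dots> = d" using reg x HV unfolding regular_def by auto
  finally have cu: "card (S1 \<union> S2) \<le> d" .
  have fS: "finite S1" "finite S2" using fin unfolding S1_def S2_def by auto
  have "card (S1 \<union> S2) + card (S1 \<inter> S2) = card S1 + card S2"
    using card_Un_Int[OF fS] by simp
  hence "real (card (S1 \<union> S2)) + real (card (S1 \<inter> S2)) = real (card S1) + real (card S2)"
    by (metis of_nat_add)
  moreover have "real (card (S1 \<union> S2)) \<le> real d" using cu by simp
  moreover have "(1 - 4*\<delta>) * d = real d - 4 * \<delta> * d" by (simp add: algebra_simps)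
  ultimately have ci: "real (card (S1 \<inter> S2)) \<ge> real d - 8 * \<delta> * d" using c1 c2 by linarith
  have xn: "x \<notin> S1 \<inter> S2" using sg unfolding S1_def simple_graph_def by auto
  have "insert x (S1 \<inter> S2) \<subseteq> H \<inter> H0" using x unfolding S1_def S2_def by auto
  hence "card (insert x (S1 \<inter> S2)) \<le> card (H \<inter> H0)" using fin by (intro card_mono) auto
  moreover have "card (insert x (S1 \<inter> S2)) = card (S1 \<inter> S2) + 1" using xn fS by simp
  ultimately show ?thesis using ci by linarith
qed

lemma outside_nbrs:
  assumes sg: "simple_graph V E" and reg: "regular V E d"
    and H: "dense_spot V E d \<delta> H" and H0: "dense_spot V E d \<delta> H0"
    and x: "x \<in> H" "x \<in> H0" and y: "y \<in> H" "y \<notin> H0"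
  shows "real (card {z\<in>H0. E y z}) \<ge> real d - 12 * \<delta> * d + 1"
proof -
  have finV: "finite V" using sg by (simp add: simple_graph_def)
  have HV: "H \<subseteq> V" "H0 \<subseteq> V" using H H0 by (auto simp: dense_spot_def)
  have fin: "finite H" "finite H0" using HV finV finite_subset by auto
  have ib: "real (card (H \<inter> H0)) \<ge> real d - 8 * \<delta> * d + 1" by (rule inter_big[OF sg reg H H0 x])
  have cH: "card H \<le> d + 1" using H by (simp add: dense_spot_def)
  have "card H = card (H \<inter> H0) + card (H - H0)"
    using fin(1) by (rule card_Int_Diff)
  hence hd: "real (card (H - H0)) \<le> 8 * \<delta> * d" using ib cH by linarith
  have "card (H - H0 - {y}) = card (H - H0) - 1" using y fin by simp
  moreover have "card (H - H0) \<ge> 1" using y fin by (metis DiffI card_0_eq empty_iff finite_Diff less_one not_less)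
  ultimately have hd2: "real (card (H - H0 - {y})) = real (card (H - H0)) - 1" by simp
  have dy: "real (card {z\<in>H. E y z}) \<ge> (1 - 4*\<delta>) * d" using H y unfolding dense_spot_def deg_in_def by auto
  have "{z\<in>H. E y z} \<subseteq> {z\<in>H0. E y z} \<union> (H - H0 - {y})" using sg unfolding simple_graph_def by auto
  hence "card {z\<in>H. E y z} \<le> card ({z\<in>H0. E y z} \<union> (H - H0 - {y}))" using fin by (intro card_mono) auto
  also have "\<dots> \<le> card {z\<in>H0. E y z} + card (H - H0 - {y})" by (rule card_Un_le)
  finally have "real (card {z\<in>H. E y z}) \<le> real (card {z\<in>H0. E y z}) + real (card (H - H0 - {y}))"
    by (metis of_nat_add of_nat_le_iff)
  moreover have "(1 - 4*\<delta>) * d = real d - 4 * \<delta> * d" by (simp add: algebra_simps)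
  ultimately show ?thesis using dy hd hd2 by linarith
qed

lemma out_le:
  assumes sg: "simple_graph V E" and reg: "regular V E d"
    and H0: "dense_spot V E d \<delta> H0" and z: "z \<in> H0"
  shows "real (card {y\<in>V - H0. E z y}) \<le> 4 * \<delta> * d"
proof -
  have finV: "finite V" using sg by (simp add: simple_graph_def)
  have HV: "H0 \<subseteq> V" using H0 by (auto simp: dense_spot_def)
  have "{y\<in>V. E z y} = {y\<in>H0. E z y} \<union> {y\<in>V - H0. E z y}" using HV by auto
  moreover have "card {y\<in>V. E z y} = d" using reg z HV unfolding regular_def by auto
  moreover have "card ({y\<in>H0. E z y} \<union> {y\<in>V - H0. E z y}) = card {y\<in>H0. E z y} + card {y\<in>V - H0. E z y}"
    using finV HV by (intro card_Un_disjoint) (auto intro: finite_subset)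
  ultimately have e: "real (card {y\<in>H0. E z y}) + real (card {y\<in>V - H0. E z y}) = real d" by simp
  have "real (card {y\<in>H0. E z y}) \<ge> (1 - 4*\<delta>) * d" using H0 z unfolding dense_spot_def deg_in_def by auto
  moreover have "(1 - 4*\<delta>) * d = real d - 4 * \<delta> * d" by (simp add: algebra_simps)
  ultimately show ?thesis using e by linarith
qed

theorem lemma6:
  fixes V :: "'a set" and E :: "'a \<Rightarrow> 'a \<Rightarrow> bool" and n d :: nat and c \<delta> :: real
    and K :: "'a set"
  assumes "0 < c" "c < 1"
    and "d \<ge> 1" "real n > real d ^ 2"
    and "\<delta> = (3 * c) powr (1/3) * (ln (real d) / ln (real n / real d ^ 2)) powr (1/4)"
    and "\<delta> < 1/16"
    and "simple_graph V E" "card V = n" "regular V E d"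
    and "pseudo_clique V E d \<delta> K"
  shows "real (card K) \<le> (1 - 8 * \<delta>) / (1 - 13 * \<delta>) * (real d + 1)"
proof -
  note sg = assms(7) and reg = assms(9)
  have dpos: "\<delta> \<ge> 0" using assms(5) by simp
  have dl: "\<delta> < 1/16" by (rule assms(6))
  have rpos: "(1 - 8 * \<delta>) / (1 - 13 * \<delta>) * (real d + 1) \<ge> 0" using dpos dl by simp
  obtain HH where HH: "maximal_intersecting_family V E d \<delta> HH" "K = \<Union>HH"
    using assms(10) unfolding pseudo_clique_def by blast
  have ds: "\<And>H. H \<in> HH \<Longrightarrow> dense_spot V E d \<delta> H" and pi: "pairwise_intersecting HH"
    using HH(1) unfolding maximal_intersecting_family_def by auto
  have finV: "finite V" using sg by (simp add: simple_graph_def)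
  have KV: "K \<subseteq> V" using ds HH(2) unfolding dense_spot_def by auto
  have finK: "finite K" using KV finV finite_subset by auto
  show ?thesis
  proof (cases "HH = {}")
    case True
    then show ?thesis using HH(2) rpos by simp
  next
    case False
    then obtain H0 where H0in: "H0 \<in> HH" by blast
    have H0: "dense_spot V E d \<delta> H0" using ds H0in .
    have H0V: "H0 \<subseteq> V" and cH0: "card H0 \<le> d + 1" using H0 unfolding dense_spot_def by auto
    have finH0: "finite H0" using H0V finV finite_subset by auto
    define M where "M = K - H0"
    have finM: "finite M" using finK M_def by simp
    define a where "a = real d - 12 * \<delta> * d + 1"
    have lb: "a \<le> real (card {z\<in>H0. E y z})" if y: "y \<in> M" for y
    proof -
      obtain H where H: "H \<in> HH" "y \<in> H" using y HH(2) M_def by auto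
      have "y \<notin> H0" using y M_def by auto
      hence "H \<noteq> H0" using H by auto
      then obtain x where "x \<in> H" "x \<in> H0" using pi H H0in unfolding pairwise_intersecting_def by blast
      then show ?thesis unfolding a_def using outside_nbrs[OF sg reg ds[OF H(1)] H0 _ _ H(2) \<open>y \<notin> H0\<close>] by blast
    qed
    have "real (card M) * a \<le> (\<Sum>y\<in>M. real (card {z\<in>H0. E y z}))"
      using sum_bounded_below[of M a "\<lambda>y. real (card {z\<in>H0. E y z})"] lb by (simp add: mult.commute)
    also have "\<dots> = (\<Sum>y\<in>M. \<Sum>z\<in>H0. if E y z then 1 else (0::real))"
      using finH0 by (simp add: card_filter_sum)
    also have "\<dots> = (\<Sum>z\<in>H0. \<Sum>y\<in>M. if E y z then 1 else (0::real))"
      by (rule sum.swap)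
    also have "\<dots> = (\<Sum>z\<in>H0. real (card {y\<in>M. E y z}))"
      using finM by (simp add: card_filter_sum)
    also have "\<dots> \<le> (\<Sum>z\<in>H0. 4 * \<delta> * d)"
    proof (rule sum_mono)
      fix z assume z: "z \<in> H0"
      have "{y\<in>M. E y z} \<subseteq> {y\<in>V - H0. E z y}" using sg KV unfolding M_def simple_graph_def by auto
      hence "card {y\<in>M. E y z} \<le> card {y\<in>V - H0. E z y}" using finV by (intro card_mono) auto
      then show "real (card {y\<in>M. E y z}) \<le> 4 * \<delta> * d" using out_le[OF sg reg H0 z] by linarith
    qed
    also have "\<dots> = real (card H0) * (4 * \<delta> * d)" by simp
    also have "\<dots> \<le> (real d + 1) * (4 * \<delta> * d)"
      using cH0 dpos by (intro mult_right_mono) auto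
    finally have main: "real (card M) * a \<le> (real d + 1) * (4 * \<delta> * d)" .
    have "real (card M) * a = real d * (real (card M) * (1 - 12 * \<delta>)) + real (card M)"
      unfolding a_def by (simp add: algebra_simps)
    moreover have "real (card M) \<ge> 0" by simp
    moreover have "real d * (4 * \<delta> * (real d + 1)) = (real d + 1) * (4 * \<delta> * d)"
      by (simp add: algebra_simps)
    ultimately have "real d * (real (card M) * (1 - 12 * \<delta>)) \<le> real d * (4 * \<delta> * (real d + 1))"
      using main by linarith
    hence m1: "real (card M) * (1 - 12 * \<delta>) \<le> 4 * \<delta> * (real d + 1)"
      using assms(3) by (simp add: mult_le_cancel_left)
    have m2: "real (card M) * (1 - 13 * \<delta>) \<le> 5 * \<delta> * (real d + 1)"
    proof -
      have "real (card M) * (1 - 8 * \<delta>) \<ge> 0" using dl by (intro mult_nonneg_nonneg) auto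
      moreover have "4 * (real (card M) * (1 - 13 * \<delta>)) = 5 * (real (card M) * (1 - 12 * \<delta>)) - real (card M) * (1 - 8 * \<delta>)"
        by (simp add: algebra_simps)
      ultimately have "4 * (real (card M) * (1 - 13 * \<delta>)) \<le> 5 * (real (card M) * (1 - 12 * \<delta>))"
        by linarith
      then show ?thesis using m1 by linarith
    qed
    have cK: "card K = card H0 + card M"
    proof -
      have "K = H0 \<union> M" using HH(2) H0in unfolding M_def by auto
      moreover have "H0 \<inter> M = {}" unfolding M_def by auto
      ultimately show ?thesis using finH0 finM card_Un_disjoint by metis
    qed
    have pos: "1 - 13 * \<delta> > 0" using dl by simp
    have "(1 - 8 * \<delta>) / (1 - 13 * \<delta>) * (real d + 1) = (real d + 1) + 5 * \<delta> * (real d + 1) / (1 - 13 * \<delta>)"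
      using pos by (simp add: field_simps)
    moreover have "real (card M) \<le> 5 * \<delta> * (real d + 1) / (1 - 13 * \<delta>)"
      using m2 pos by (simp add: field_simps)
    ultimately show ?thesis using cK cH0 by simp
  qed
qed

end
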